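(* Assume (A1) the parameter space $\Theta$ of $\theta=(B,\Omega)$ is compact and (A2) the variational parameter space $\Psi$ is bounded. Then: (i) $\theta\mapsto J(\theta,\psi)$ is continuous for almost every $Y$; (ii) $\widehat\theta^{\mathrm{ve}}$ lies in a compact set with probability tending to one; (iii) $J$ has a measurable and $p_{\theta^\star}$-integrable local envelope: for every $\delta>0$ and every $\theta'\in\Theta$, the function $Y\mapsto\sup_{\psi\in\Psi}\sup_{\theta\in\mathcal B_\delta(\theta')\cap\Theta}J(\theta,\psi)$ is $p_{\theta^\star}$-integrable.
   Context: PLN model: latent $Z\sim\mathcal N_p(0,\Omega^{-1})$, and given $Z$, coordinates $Y_j\sim\mathcal P(\exp(o_j+x^\top B_j+Z_j))$ independently, for a generic observation $Y\in\mathbb N^p$ with fixed covariate $x\in\mathbb R^m$ and offset $o\in\mathbb R^p$; $B\in\mathcal M_{m,p}(\mathbb R)$ with columns $B_j$, $\Omega$ symmetric positive definite. Data are generated under a true parameter $\theta^\star\in\Theta$ with law $p_{\theta^\star}$. Variational parameters $\psi=(m,s)\in\Psi\subset\mathbb R^p\times(0,\infty)^p$. Single-observation ELBO: $J(\theta,\psi)=Y^\top(o+m+B^\top x)-\tilde a^\top1_p-\sum_j\log(Y_j!)+\frac12\log|\Omega|-\frac12m^\top\Omega m-\frac12\mathrm{diag}(\Omega)^\top s^2+\sum_j\log s_j+\frac p2$, $\tilde a_j=\exp(o_j+x^\top B_j+m_j+s_j^2/2)$. The variational estimator $\widehat\theta^{\mathrm{ve}}$ is the $\theta$-part of a maximizer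 over $\Theta\times\Psi^n$ of $\sum_{i=1}^nJ_i(\theta,\psi_i)$ for $n$ independent observations. $\mathcal B_\delta(\theta')$ is the ball of radius $\delta$ around $\theta'$. *)

theory Defs
  imports "HOL-Probability.Probability"
begin

definition poisson_pmf_val :: "real \<Rightarrow> nat \<Rightarrow> real" where
  "poisson_pmf_val l k = exp (- l) * l ^ k / fact k"

text \<open>Density of the centred Gaussian N(0, Omega^{-1}) on R^p (Omega = precision matrix).\<close>
definition gauss_prec_density :: "real^'p^'p \<Rightarrow> real^'p \<Rightarrow> real" where
  "gauss_prec_density \<Omega> z =
     (2 * pi) powr (- real CARD('p) / 2) * sqrt (det \<Omega>) * exp (- (z \<bullet> (\<Omega> *v z)) / 2)"

text \<open>PLN probability mass function of Y, for parameter (B, Omega), covariate x, offset o.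
  B is an m x p matrix (rows indexed by 'm, columns B_j indexed by 'p);
  x^T B_j = (transpose B *v x) $ j.\<close>
definition pln_pmf :: "real^'m \<Rightarrow> real^'p \<Rightarrow> ((real^'p^'m) \<times> (real^'p^'p)) \<Rightarrow> nat^'p \<Rightarrow> real" where
  "pln_pmf x off \<theta> Y = (case \<theta> of (B, \<Omega>) \<Rightarrow>
     integral\<^sup>L lborel (\<lambda>z::real^'p.
        (\<Prod>j\<in>UNIV. poisson_pmf_val (exp (off $ j + (transpose B *v x) $ j + z $ j)) (Y $ j))
        * gauss_prec_density \<Omega> z))"

definition pln_law :: "real^'m \<Rightarrow> real^'p \<Rightarrow> ((real^'p^'m) \<times> (real^'p^'p)) \<Rightarrow> (nat^'p) measure" where
  "pln_law x off \<theta> = density (count_space UNIV) (\<lambda>Y. ennreal (pln_pmf x off \<theta> Y))"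

definition pln_sample :: "real^'m \<Rightarrow> real^'p \<Rightarrow> ((real^'p^'m) \<times> (real^'p^'p)) \<Rightarrow> nat \<Rightarrow> (nat \<Rightarrow> nat^'p) measure" where
  "pln_sample x off \<theta> n = PiM {..<n} (\<lambda>_. pln_law x off \<theta>)"

definition spd :: "real^'p^'p \<Rightarrow> bool" where
  "spd \<Omega> \<longleftrightarrow> transpose \<Omega> = \<Omega> \<and> (\<forall>v. v \<noteq> 0 \<longrightarrow> v \<bullet> (\<Omega> *v v) > 0)"

definition pln_elbo :: "real^'m \<Rightarrow> real^'p \<Rightarrow> nat^'p \<Rightarrow> ((real^'p^'m) \<times> (real^'p^'p)) \<Rightarrow> ((real^'p) \<times> (real^'p)) \<Rightarrow> real" where
  "pln_elbo x off Y \<theta> \<psi> = (case \<theta> of (B, \<Omega>) \<Rightarrow> case \<psi> of (m, s) \<Rightarrow>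
       (\<chi> j. real (Y $ j)) \<bullet> (off + m + transpose B *v x)
     - (\<Sum>j\<in>UNIV. exp (off $ j + (transpose B *v x) $ j + m $ j + (s $ j)^2 / 2))
     - (\<Sum>j\<in>UNIV. ln (fact (Y $ j)))
     + ln (det \<Omega>) / 2
     - (m \<bullet> (\<Omega> *v m)) / 2
     - (\<Sum>j\<in>UNIV. \<Omega> $ j $ j * (s $ j)^2) / 2
     + (\<Sum>j\<in>UNIV. ln (s $ j))
     + real CARD('p) / 2)"

definition is_ve :: "real^'m \<Rightarrow> real^'p \<Rightarrow> ((real^'p^'m) \<times> (real^'p^'p)) set \<Rightarrow> ((real^'p) \<times> (real^'p)) set
    \<Rightarrow> nat \<Rightarrow> (nat \<Rightarrow> nat^'p) \<Rightarrow> ((real^'p^'m) \<times> (real^'p^'p)) \<Rightarrow> bool" where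
  "is_ve x off \<Theta> \<Psi> n ys \<theta> \<longleftrightarrow> \<theta> \<in> \<Theta> \<and>
     (\<exists>\<psi>s. (\<forall>i<n. \<psi>s i \<in> \<Psi>) \<and>
        (\<forall>\<theta>'\<in>\<Theta>. \<forall>\<psi>s'. (\<forall>i<n. \<psi>s' i \<in> \<Psi>) \<longrightarrow>
            (\<Sum>i<n. pln_elbo x off (ys i) \<theta>' (\<psi>s' i)) \<le> (\<Sum>i<n. pln_elbo x off (ys i) \<theta> (\<psi>s i))))"

end

theory Submission
  imports Defs
begin




lemma Basis_vec_real: "(Basis :: (real^'p) set) = range (\<lambda>i. axis i 1)"
  by (auto simp: Basis_vec_def)

lemma nn_integral_lborel_prod_vec:
  fixes f :: "'p::finite \<Rightarrow> real \<Rightarrow> ennreal"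
  assumes [measurable]: "\<And>i. f i \<in> borel_measurable borel"
  shows "(\<integral>\<^sup>+z. (\<Prod>i\<in>UNIV. f i (z$i)) \<partial>(lborel::(real^'p) measure)) = (\<Prod>i\<in>UNIV. \<integral>\<^sup>+x. f i x \<partial>lborel)"
proof -
  define F where "F b = f (SOME i. b = axis i (1::real))" for b :: "real^'p"
  have Fa: "F (axis i 1) = f i" for i
    unfolding F_def by (rule arg_cong[where f=f]) (rule some_equality, auto simp: axis_eq_axis)
  have inj: "inj (\<lambda>i::'p. axis i (1::real))" by (auto simp: inj_def axis_eq_axis)
  have "(\<integral>\<^sup>+z. (\<Prod>b\<in>Basis. F b (z \<bullet> b)) \<partial>(lborel::(real^'p) measure)) = (\<Prod>b\<in>Basis. \<integral>\<^sup>+x. F b x \<partial>lborel)"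
    by (rule nn_integral_lborel_prod) (auto simp: Basis_vec_real Fa)
  moreover have "\<And>z::real^'p. (\<Prod>b\<in>Basis. F b (z \<bullet> b)) = (\<Prod>i\<in>UNIV. f i (z$i))"
    by (simp add: Basis_vec_real prod.reindex[OF inj] Fa inner_axis)
  moreover have "(\<Prod>b\<in>(Basis::(real^'p) set). \<integral>\<^sup>+x. F b x \<partial>lborel) = (\<Prod>i\<in>UNIV. \<integral>\<^sup>+x. f i x \<partial>lborel)"
    by (simp add: Basis_vec_real prod.reindex[OF inj] Fa)
  ultimately show ?thesis by simp
qed


lemma qf_expand: "z \<bullet> (A *v z) = (\<Sum>i\<in>UNIV. \<Sum>j\<in>UNIV. z$i * A$i$j * z$j)"
  for A :: "real^'p^'p"
  by (simp add: inner_vec_def matrix_vector_mult_def sum_distrib_left mult.assoc)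

lemma qf_continuous: "continuous_on UNIV (\<lambda>z::real^'p. z \<bullet> (A *v z))"
  for A :: "real^'p^'p"
  unfolding qf_expand by (intro continuous_intros)

lemma qf_measurable[measurable]: "(\<lambda>z::real^'p. z \<bullet> (A *v z)) \<in> borel_measurable borel"
  for A :: "real^'p^'p"
  by (rule borel_measurable_continuous_onI[OF qf_continuous])

lemma sqrt_prod: "finite A \<Longrightarrow> sqrt (prod f A) = prod (\<lambda>x. sqrt (f x)) A"
  by (induction A rule: finite_induct) (auto simp: real_sqrt_mult)

lemma gauss_1d:
  fixes a :: real assumes a: "a > 0"
  shows "(\<integral>\<^sup>+y. ennreal (exp (- (a * y\<^sup>2 / 2))) \<partial>lborel) = ennreal (sqrt (2 * pi / a))"
proof -
  define \<sigma> where "\<sigma> = 1 / sqrt a"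
  have \<sigma>: "\<sigma> > 0" using a by (simp add: \<sigma>_def)
  have "exp (- (a * y\<^sup>2 / 2)) = sqrt (2 * pi / a) * normal_density 0 \<sigma> y" for y
    using a by (simp add: normal_density_def \<sigma>_def power_divide real_sqrt_divide field_simps)
  then have "(\<integral>\<^sup>+y. ennreal (exp (- (a * y\<^sup>2 / 2))) \<partial>lborel)
      = (\<integral>\<^sup>+y. ennreal (sqrt (2 * pi / a)) * ennreal (normal_density 0 \<sigma> y) \<partial>lborel)"
    using a by (simp add: ennreal_mult)
  also have "\<dots> = ennreal (sqrt (2 * pi / a)) * (\<integral>\<^sup>+y. ennreal (normal_density 0 \<sigma> y) \<partial>lborel)"
    by (rule nn_integral_cmult) simp
  also have "(\<integral>\<^sup>+y. ennreal (normal_density 0 \<sigma> y) \<partial>lborel) = 1"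
    using \<sigma> by (subst nn_integral_eq_integral) auto
  finally show ?thesis by simp
qed

lemma gauss_diag:
  fixes A :: "real^'p^'p"
  assumes diag: "\<And>i j. i \<noteq> j \<Longrightarrow> A$i$j = 0" and pos: "\<And>i. A$i$i > 0"
  shows "(\<integral>\<^sup>+z. ennreal (exp (- (z \<bullet> (A *v z) / 2))) \<partial>lborel) = ennreal (sqrt (2 * pi) ^ CARD('p) / sqrt (det A))"
proof -
  have q: "z \<bullet> (A *v z) = (\<Sum>i\<in>UNIV. A$i$i * (z$i)\<^sup>2)" for z
  proof -
    have "z \<bullet> (A *v z) = (\<Sum>i\<in>UNIV. \<Sum>j\<in>UNIV. if j = i then z$i * A$i$i * z$i else 0)"
      unfolding qf_expand by (intro sum.cong refl) (auto simp: diag)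
    then show ?thesis by (simp add: power2_eq_square mult.commute mult.left_commute)
  qed
  have "(\<lambda>z::real^'p. ennreal (exp (- (z \<bullet> (A *v z) / 2)))) = (\<lambda>z. \<Prod>i\<in>UNIV. ennreal (exp (- (A$i$i * (z$i)\<^sup>2 / 2))))"
    by (simp add: q prod_ennreal exp_sum[symmetric] sum_divide_distrib sum_negf)
  then have "(\<integral>\<^sup>+z. ennreal (exp (- (z \<bullet> (A *v z) / 2))) \<partial>lborel) = (\<Prod>i\<in>UNIV. \<integral>\<^sup>+y. ennreal (exp (- (A$i$i * y\<^sup>2 / 2))) \<partial>lborel)"
    using nn_integral_lborel_prod_vec[where f="\<lambda>i y. ennreal (exp (- (A$i$i * y\<^sup>2 / 2)))"] by simp
  also have "\<dots> = (\<Prod>i\<in>UNIV. ennreal (sqrt (2 * pi / A$i$i)))"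
    using pos by (simp add: gauss_1d)
  also have "\<dots> = ennreal (\<Prod>i\<in>UNIV. sqrt (2 * pi / A$i$i))"
    by (rule prod_ennreal) (use pos in \<open>simp add: less_imp_le\<close>)
  also have "(\<Prod>i\<in>UNIV. sqrt (2 * pi / A$i$i)) = sqrt (2 * pi) ^ CARD('p) / sqrt (det A)"
    by (simp add: det_diagonal[OF diag] sqrt_prod real_sqrt_divide prod_dividef)
  finally show ?thesis .
qed



lemma nn_integral_lborel_vec_PiM:
  fixes F :: "real^'p::finite \<Rightarrow> ennreal"
  assumes [measurable]: "F \<in> borel_measurable borel"
  shows "(\<integral>\<^sup>+z. F z \<partial>lborel) = (\<integral>\<^sup>+h. F (\<Sum>b\<in>Basis. h b *\<^sub>R b) \<partial>(\<Pi>\<^sub>M b\<in>Basis. lborel))"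
  by (subst lborel_eq) (simp add: nn_integral_distr)

lemma shear_invariant:
  fixes f :: "real^'p::finite \<Rightarrow> ennreal" and c :: "real^'p \<Rightarrow> real"
  assumes f[measurable]: "f \<in> borel_measurable borel" and c[measurable]: "c \<in> borel_measurable borel"
    and cind: "\<And>z t. c (z + t *\<^sub>R axis k 1) = c z"
  shows "(\<integral>\<^sup>+z. f (z + c z *\<^sub>R axis k 1) \<partial>lborel) = (\<integral>\<^sup>+z. f z \<partial>lborel)"
proof -
  interpret P: product_sigma_finite "\<lambda>_::real^'p. lborel::real measure"
    by standard
  define bk :: "real^'p" where "bk = axis k 1"
  define I where "I = Basis - {bk}"
  have bkB: "bk \<in> Basis" by (simp add: bk_def)
  have BI: "Basis = insert bk I" "finite I" "bk \<notin> I" using bkB by (auto simp: I_def)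
  define V' where "V' x = (\<Sum>b\<in>I. x b *\<^sub>R b)" for x :: "real^'p \<Rightarrow> real"
  have V: "(\<Sum>b\<in>Basis. (x(bk := y)) b *\<^sub>R b) = V' x + y *\<^sub>R bk" for x y
  proof -
    have "(\<Sum>b\<in>insert bk I. (x(bk := y)) b *\<^sub>R b) = y *\<^sub>R bk + (\<Sum>b\<in>I. (x(bk := y)) b *\<^sub>R b)"
      by (subst sum.insert[OF BI(2,3)]) simp
    also have "(\<Sum>b\<in>I. (x(bk := y)) b *\<^sub>R b) = V' x"
      unfolding V'_def using BI by (intro sum.cong) auto
    finally show ?thesis using BI by (simp add: add.commute)
  qed
  have Vmeas[measurable]: "(\<lambda>h. \<Sum>b\<in>Basis. h b *\<^sub>R b) \<in> borel_measurable (\<Pi>\<^sub>M b\<in>insert bk I. (lborel::real measure))"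
    unfolding BI(1)[symmetric] by measurable
  have cVm: "(\<lambda>h. c (\<Sum>b\<in>Basis. h b *\<^sub>R b)) \<in> borel_measurable (\<Pi>\<^sub>M b\<in>insert bk I. (lborel::real measure))"
    by (rule measurable_compose[OF Vmeas c])
  have M1: "(\<lambda>h. f ((\<Sum>b\<in>Basis. h b *\<^sub>R b) + c (\<Sum>b\<in>Basis. h b *\<^sub>R b) *\<^sub>R bk)) \<in> borel_measurable (\<Pi>\<^sub>M b\<in>insert bk I. (lborel::real measure))"
    by (rule measurable_compose[OF _ f], rule borel_measurable_add[OF Vmeas], rule borel_measurable_scaleR[OF cVm], simp)
  have M2: "(\<lambda>h. f (\<Sum>b\<in>Basis. h b *\<^sub>R b)) \<in> borel_measurable (\<Pi>\<^sub>M b\<in>insert bk I. (lborel::real measure))"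
    by (rule measurable_compose[OF Vmeas f])
  have cV: "c (V' x + y *\<^sub>R bk) = c (V' x)" for x y
    using cind[of "V' x" y] by (simp add: bk_def)
  have tr: "(\<integral>\<^sup>+y. f (V' x + (t + y) *\<^sub>R bk) \<partial>lborel) = (\<integral>\<^sup>+y. f (V' x + y *\<^sub>R bk) \<partial>lborel)" for x t
  proof -
    have "(\<integral>\<^sup>+y. f (V' x + y *\<^sub>R bk) \<partial>lborel) = ennreal \<bar>1\<bar> * (\<integral>\<^sup>+y. f (V' x + (t + 1 * y) *\<^sub>R bk) \<partial>lborel)"
      by (rule nn_integral_real_affine) auto
    then show ?thesis by simp
  qed
  have "(\<integral>\<^sup>+z. f (z + c z *\<^sub>R axis k 1) \<partial>lborel)
     = (\<integral>\<^sup>+h. f ((\<Sum>b\<in>Basis. h b *\<^sub>R b) + c (\<Sum>b\<in>Basis. h b *\<^sub>R b) *\<^sub>R bk) \<partial>(\<Pi>\<^sub>M b\<in>Basis. lborel))"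
    unfolding bk_def by (rule nn_integral_lborel_vec_PiM) measurable
  also have "\<dots> = (\<integral>\<^sup>+h. f ((\<Sum>b\<in>Basis. h b *\<^sub>R b) + c (\<Sum>b\<in>Basis. h b *\<^sub>R b) *\<^sub>R bk) \<partial>(\<Pi>\<^sub>M b\<in>insert bk I. lborel))"
    using BI by simp
  also have "\<dots> = (\<integral>\<^sup>+x. (\<integral>\<^sup>+y. f (V' x + (c (V' x) + y) *\<^sub>R bk) \<partial>lborel) \<partial>(\<Pi>\<^sub>M b\<in>I. lborel))"
    apply (subst P.product_nn_integral_insert[OF BI(2,3) M1])
    apply (simp only: V cV)
    apply (simp add: algebra_simps)
    done
  also have "\<dots> = (\<integral>\<^sup>+x. (\<integral>\<^sup>+y. f (V' x + y *\<^sub>R bk) \<partial>lborel) \<partial>(\<Pi>\<^sub>M b\<in>I. lborel))"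
    by (simp add: tr)
  also have "\<dots> = (\<integral>\<^sup>+h. f (\<Sum>b\<in>Basis. h b *\<^sub>R b) \<partial>(\<Pi>\<^sub>M b\<in>insert bk I. lborel))"
    apply (subst P.product_nn_integral_insert[OF BI(2,3) M2])
    apply (simp only: V)
    done
  also have "\<dots> = (\<integral>\<^sup>+z. f z \<partial>lborel)"
    using BI by (simp add: nn_integral_lborel_vec_PiM[OF f, symmetric])
  finally show ?thesis .
qed




lemma sym_entry: "transpose A = A \<Longrightarrow> A$i$j = A$j$i"
  by (metis transpose_def vec_lambda_beta)

lemma shear_facts:
  fixes A :: "real^'p^'p" and k :: 'p and a :: real and c :: "real^'p"
  assumes sym: "transpose A = A" and a: "a = A$k$k" "a > 0"
    and c: "c = (\<chi> j. if j = k then 0 else A$k$j / a)"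
    and A': "A' = (\<chi> i j. if i = k \<or> j = k then (if i = j then a else 0) else A$i$j - A$i$k * A$k$j / a)"
    and M: "M = (\<chi> i j. (if i = j then 1 else 0) + (if i = k then c$j else 0))"
  shows "A = transpose M ** A' ** M" "\<And>z. M *v z = z + (c \<bullet> z) *\<^sub>R axis k 1" "det M = 1"
proof -
  have ck: "c$k = 0" by (simp add: c)
  have AM: "(A' ** M)$p$j = A'$p$j + A'$p$k * c$j" for p j
    by (simp add: M matrix_matrix_mult_def distrib_left sum.distrib if_distrib[of "\<lambda>x. _ * x"] sum.delta cong: if_cong)
  have "(transpose M ** A' ** M)$i$j = (A' ** M)$i$j + c$i * (A' ** M)$k$j" for i j
    by (simp add: M matrix_matrix_mult_def transpose_def distrib_right sum.distrib if_distrib[of "\<lambda>x. x * _"] sum.delta sum_distrib_left mult.assoc cong: if_cong)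
  then have "(transpose M ** A' ** M)$i$j = A$i$j" for i j
    unfolding AM using a ck sym_entry[OF sym, of i k] sym_entry[OF sym, of k j]
    by (cases "i = k"; cases "j = k") (auto simp: A' c field_simps)
  then show "A = transpose M ** A' ** M"
    by (simp add: vec_eq_iff)
  show "M *v z = z + (c \<bullet> z) *\<^sub>R axis k 1" for z
    by (simp add: vec_eq_iff M matrix_vector_mult_def distrib_right sum.distrib if_distrib[of "\<lambda>x. x * _"] sum.delta inner_vec_def axis_def cong: if_cong)
  have "M = (\<chi> i. if i = k then row k (mat 1) + c else row i (mat 1))"
    by (simp add: vec_eq_iff M row_def mat_def)
  moreover have "c \<in> vec.span {row j (mat 1 :: real^'p^'p) |j. j \<noteq> k}"
  proof -
    have "c = (\<Sum>j\<in>UNIV - {k}. c$j *s row j (mat 1 :: real^'p^'p))"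
      by (simp add: vec_eq_iff row_def mat_def ck if_distrib[of "\<lambda>x. _ * x"] cong: if_cong)
    also have "\<dots> \<in> vec.span {row j (mat 1 :: real^'p^'p) |j. j \<noteq> k}"
      by (intro vec.span_sum vec.span_scale vec.span_base) auto
    finally show ?thesis .
  qed
  ultimately show "det M = 1"
    using det_row_span[where A="mat 1 :: real^'p^'p" and x=c and i=k] by simp
qed



lemma spd_sym: "spd A \<Longrightarrow> transpose A = A" by (simp add: spd_def)

lemma spd_pos: "spd A \<Longrightarrow> z \<noteq> 0 \<Longrightarrow> z \<bullet> (A *v z) > 0" by (simp add: spd_def)

lemma axis_qf: "axis i 1 \<bullet> (A *v axis i 1) = A$i$i" for A :: "real^'p^'p"
proof -
  have "axis i 1 \<bullet> (A *v axis i 1) = (A *v axis i 1)$i" by (simp only: inner_axis') simp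
  also have "\<dots> = A$i$i"
    by (simp add: matrix_vector_mult_def axis_def if_distrib[of "\<lambda>x. _ * x"] cong: if_cong)
  finally show ?thesis .
qed

lemma spd_diag_pos: "spd A \<Longrightarrow> A$i$i > 0" for A :: "real^'p^'p"
  using spd_pos[of A "axis i 1"] by (simp add: axis_qf)

lemma qf_transform: "z \<bullet> ((transpose M ** B ** M) *v z) = (M *v z) \<bullet> (B *v (M *v z))"
  for M B :: "real^'p^'p"
proof -
  have "z \<bullet> ((transpose M ** B ** M) *v z) = z \<bullet> (transpose M *v (B *v (M *v z)))"
    by (simp only: matrix_vector_mul_assoc matrix_mul_assoc)
  also have "\<dots> = ((B *v (M *v z)) v* M) \<bullet> z"
    by (simp only: transpose_matrix_vector inner_commute)
  also have "\<dots> = (B *v (M *v z)) \<bullet> (M *v z)"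
    by (rule dot_lmul_matrix)
  finally show ?thesis by (simp only: inner_commute)
qed

lemma gauss_induct:
  fixes S :: "'p::finite set"
  assumes "finite S"
  shows "spd A \<Longrightarrow> (\<And>i j. i \<noteq> j \<Longrightarrow> i \<notin> S \<or> j \<notin> S \<Longrightarrow> A$i$j = 0) \<Longrightarrow>
    det A > 0 \<and> (\<integral>\<^sup>+z. ennreal (exp (- (z \<bullet> (A *v z) / 2))) \<partial>lborel) = ennreal (sqrt (2 * pi) ^ CARD('p) / sqrt (det A))"
  using assms
proof (induction S arbitrary: A rule: finite_induct)
  case empty
  have diag: "\<And>i j. i \<noteq> j \<Longrightarrow> A$i$j = 0" using empty by auto
  have pos: "\<And>i. A$i$i > 0" using spd_diag_pos[OF empty(1)] .
  show ?case
    using gauss_diag[OF diag pos] det_diagonal[OF diag] pos by (simp add: prod_pos)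
next
  case (insert k S)
  note spdA = insert.prems(1)
  have sym: "transpose A = A" using spd_sym[OF spdA] .
  define a where "a = A$k$k"
  have a: "a > 0" using spd_diag_pos[OF spdA] by (simp add: a_def)
  define c where "c = (\<chi> j. if j = k then 0 else A$k$j / a)"
  define A' where "A' = (\<chi> i j. if i = k \<or> j = k then (if i = j then a else 0) else A$i$j - A$i$k * A$k$j / a)"
  define M where "M = (\<chi> i j. (if i = j then 1 else 0) + (if i = k then c$j else 0))"
  note sf = shear_facts[OF sym a_def a c_def A'_def M_def]
  have ck: "c$k = 0" by (simp add: c_def)
  have qf: "z \<bullet> (A *v z) = (M *v z) \<bullet> (A' *v (M *v z))" for z
    by (subst sf(1), rule qf_transform)
  have symA': "transpose A' = A'"
    by (auto simp: vec_eq_iff transpose_def A'_def sym_entry[OF sym] mult.commute)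
  have posA': "w \<bullet> (A' *v w) > 0" if "w \<noteq> 0" for w
  proof -
    define z where "z = w - (c \<bullet> w) *\<^sub>R axis k 1"
    have cax: "c \<bullet> axis k 1 = 0" by (simp add: inner_axis ck)
    have "c \<bullet> z = c \<bullet> w - (c \<bullet> w) * (c \<bullet> axis k 1)"
      unfolding z_def by (simp only: inner_diff_right inner_scaleR_right)
    then have cz: "c \<bullet> z = c \<bullet> w" using cax by simp
    have Mz: "M *v z = w" unfolding sf(2) cz by (simp add: z_def)
    have "z \<noteq> 0"
    proof
      assume "z = 0"
      then have "c \<bullet> w = 0" using cz by simp
      then show False using \<open>z = 0\<close> that by (simp add: z_def)
    qed
    then have "z \<bullet> (A *v z) > 0" using spd_pos[OF spdA] by simp
    then show ?thesis using qf[of z] Mz by simp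
  qed
  have spdA': "spd A'" using symA' posA' by (simp add: spd_def)
  have diagA': "A'$i$j = 0" if "i \<noteq> j" "i \<notin> S \<or> j \<notin> S" for i j
  proof (cases "i = k \<or> j = k")
    case True then show ?thesis using that by (auto simp: A'_def)
  next
    case False
    then have "A$i$j = 0" "A$i$k * A$k$j = 0"
      using insert.prems(2)[of i j] insert.prems(2)[of i k] insert.prems(2)[of k j] that by auto
    then show ?thesis using False by (simp add: A'_def)
  qed
  note IH = insert.IH[OF spdA' diagA']
  have detA: "det A = det A'"
    using sf(1) sf(3) by (metis det_mul det_transpose mult_1 mult_1_right)
  have "(\<integral>\<^sup>+z. ennreal (exp (- (z \<bullet> (A *v z) / 2))) \<partial>lborel)
      = (\<integral>\<^sup>+z. ennreal (exp (- ((z + (c \<bullet> z) *\<^sub>R axis k 1) \<bullet> (A' *v (z + (c \<bullet> z) *\<^sub>R axis k 1)) / 2))) \<partial>lborel)"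
    by (simp add: qf sf(2))
  also have "\<dots> = (\<integral>\<^sup>+z. ennreal (exp (- (z \<bullet> (A' *v z) / 2))) \<partial>lborel)"
    by (rule shear_invariant[where f="\<lambda>w. ennreal (exp (- (w \<bullet> (A' *v w) / 2)))" and c="\<lambda>z. c \<bullet> z"])
       (auto simp: inner_add_right inner_axis ck)
  finally show ?case using IH detA by simp
qed

lemma gauss_spd:
  fixes A :: "real^'p^'p"
  assumes "spd A"
  shows "det A > 0" "(\<integral>\<^sup>+z. ennreal (exp (- (z \<bullet> (A *v z) / 2))) \<partial>lborel) = ennreal (sqrt (2 * pi) ^ CARD('p) / sqrt (det A))"
  using gauss_induct[of UNIV A] assms by auto



lemma spd_min_eig:
  fixes A :: "real^'p^'p"
  assumes "spd A"
  shows "\<exists>c>0. \<forall>z. z \<bullet> (A *v z) \<ge> c * (norm z)\<^sup>2"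
proof -
  have "sphere (0::real^'p) 1 \<noteq> {}"
    using norm_axis_1[of "undefined::'p"] by (auto simp: sphere_def intro!: exI[of _ "axis undefined 1"])
  then obtain v where v: "v \<in> sphere 0 1" and vmin: "\<And>y. y \<in> sphere 0 1 \<Longrightarrow> v \<bullet> (A *v v) \<le> y \<bullet> (A *v y)"
    using continuous_attains_inf[of "sphere (0::real^'p) 1" "\<lambda>z. z \<bullet> (A *v z)"]
      compact_sphere continuous_on_subset[OF qf_continuous[of A]] by blast
  have "v \<noteq> 0" using v by auto
  then have cpos: "v \<bullet> (A *v v) > 0" using spd_pos[OF assms] by simp
  have "v \<bullet> (A *v v) * (norm z)\<^sup>2 \<le> z \<bullet> (A *v z)" for z
  proof (cases "z = 0")
    case True then show ?thesis by simp
  next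
    case False
    define y where "y = (1 / norm z) *\<^sub>R z"
    have "y \<in> sphere 0 1" using False by (simp add: y_def)
    then have "v \<bullet> (A *v v) \<le> y \<bullet> (A *v y)" by (rule vmin)
    also have "y \<bullet> (A *v y) = (z \<bullet> (A *v z)) / (norm z)\<^sup>2"
      by (simp add: y_def matrix_vector_mult_scaleR power2_eq_square)
    finally show ?thesis using False by (simp add: field_simps)
  qed
  then show ?thesis using cpos by blast
qed

lemma qf_mat: "z \<bullet> (mat r *v z) = r * (norm z)\<^sup>2" for z :: "real^'p"
  by (simp add: mat_def matrix_vector_mult_def inner_vec_def power2_norm_eq_inner if_distrib[of "\<lambda>x. x * _"] sum_distrib_left cong: if_cong) (simp add: mult_ac)

lemma gauss_mat_finite:
  assumes "r > 0"
  shows "(\<integral>\<^sup>+z. ennreal (exp (- (r * (norm z)\<^sup>2 / 2))) \<partial>(lborel::(real^'p) measure)) < \<infinity>"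
proof -
  have "(\<integral>\<^sup>+z. ennreal (exp (- (z \<bullet> (mat r *v z) / 2))) \<partial>(lborel::(real^'p) measure)) = ennreal (sqrt (2 * pi) ^ CARD('p) / sqrt (det (mat r :: real^'p^'p)))"
    by (rule gauss_diag) (auto simp: mat_def assms)
  then show ?thesis by (simp add: qf_mat)
qed

lemma gauss_dens_nonneg: "spd A \<Longrightarrow> gauss_prec_density A z \<ge> 0"
  using gauss_spd(1)[of A] by (simp add: gauss_prec_density_def)

lemma gauss_dens_measurable[measurable]: "gauss_prec_density A \<in> borel_measurable borel"
  unfolding gauss_prec_density_def[abs_def] by measurable

lemma sqrt_pow_powr: "sqrt (2 * pi) ^ n = (2 * pi) powr (real n / 2)"
  by (simp add: powr_half_sqrt[symmetric] powr_realpow[symmetric] powr_powr)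

definition gconst :: "real^'p^'p \<Rightarrow> real" where
  "gconst A = (2 * pi) powr (- real CARD('p) / 2) * sqrt (det A)"

lemma gd_eq: "gauss_prec_density A z = gconst A * exp (- (z \<bullet> (A *v z) / 2))"
  by (simp add: gauss_prec_density_def gconst_def)

lemma gconst_nonneg: "spd A \<Longrightarrow> gconst A \<ge> 0"
  using gauss_spd(1)[of A] by (simp add: gconst_def)

lemma gauss_dens_int:
  fixes A :: "real^'p^'p"
  assumes "spd A"
  shows "(\<integral>\<^sup>+z. ennreal (gauss_prec_density A z) \<partial>lborel) = 1"
proof -
  define K where "K = gconst A"
  have K: "K \<ge> 0" using gconst_nonneg[OF assms] by (simp add: K_def)
  have "(\<integral>\<^sup>+z. ennreal (gauss_prec_density A z) \<partial>lborel) = (\<integral>\<^sup>+z. ennreal K * ennreal (exp (- (z \<bullet> (A *v z) / 2))) \<partial>lborel)"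
    by (intro nn_integral_cong) (simp add: gd_eq K_def[symmetric] ennreal_mult[OF K])
  also have "\<dots> = ennreal K * ennreal (sqrt (2 * pi) ^ CARD('p) / sqrt (det A))"
    by (subst nn_integral_cmult) (auto simp: gauss_spd(2)[OF assms])
  also have "\<dots> = 1"
  proof -
    have eqKX: "K * (sqrt (2 * pi) ^ CARD('p) / sqrt (det A)) = 1"
      unfolding sqrt_pow_powr K_def gconst_def using gauss_spd(1)[OF assms]
      by (simp add: powr_minus field_simps)
    have X: "sqrt (2 * pi) ^ CARD('p) / sqrt (det A) \<ge> 0"
      using gauss_spd(1)[OF assms] by simp
    show ?thesis by (simp only: ennreal_mult[OF K X, symmetric] eqKX ennreal_1)
  qed
  finally show ?thesis .
qed

lemma gauss_exp_moment:
  fixes A :: "real^'p^'p"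
  assumes "spd A"
  shows "(\<integral>\<^sup>+z. ennreal (exp (a * z$j) * gauss_prec_density A z) \<partial>lborel) < \<infinity>"
proof -
  obtain c where c: "c > 0" "\<And>z. z \<bullet> (A *v z) \<ge> c * (norm z)\<^sup>2"
    using spd_min_eig[OF assms] by blast
  define K where "K = gconst A"
  have K: "K \<ge> 0" using gconst_nonneg[OF assms] by (simp add: K_def)
  have bnd: "exp (a * z$j) * gauss_prec_density A z \<le> K * exp (a\<^sup>2 / c) * exp (- ((c/2) * (norm z)\<^sup>2 / 2))" for z
  proof -
    have "\<bar>z$j\<bar> \<le> norm z" by (rule component_le_norm_cart)
    then have "(z$j)\<^sup>2 \<le> (norm z)\<^sup>2" using power_mono[OF \<open>\<bar>z$j\<bar> \<le> norm z\<close> abs_ge_zero, of 2] by simp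
    moreover have "a * z$j \<le> a\<^sup>2 / c + c * (z$j)\<^sup>2 / 4"
    proof -
      have "a\<^sup>2 / c + c * (z$j)\<^sup>2 / 4 - a * z$j = (2*a - c*z$j)\<^sup>2 / (4*c)"
        using c(1) by (simp add: field_simps power2_eq_square)
      moreover have "(2*a - c*z$j)\<^sup>2 / (4*c) \<ge> 0" using c(1) by simp
      ultimately show ?thesis by linarith
    qed
    ultimately have "a * z$j - z \<bullet> (A *v z) / 2 \<le> a\<^sup>2 / c - (c/2) * (norm z)\<^sup>2 / 2"
    proof -
      have "c * (z$j)\<^sup>2 \<le> c * (norm z)\<^sup>2" using \<open>(z$j)\<^sup>2 \<le> (norm z)\<^sup>2\<close> c(1) by (simp add: mult_left_mono)
      moreover have "c/2 * (norm z)\<^sup>2 / 2 = c * (norm z)\<^sup>2 / 4" by simp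
      ultimately show ?thesis using c(2)[of z] \<open>a * z$j \<le> a\<^sup>2 / c + c * (z$j)\<^sup>2 / 4\<close> by linarith
    qed
    then have "exp (a * z$j) * exp (- (z \<bullet> (A *v z) / 2)) \<le> exp (a\<^sup>2 / c) * exp (- ((c/2) * (norm z)\<^sup>2 / 2))"
      by (simp add: exp_add[symmetric])
    then show ?thesis using K
      by (simp add: gd_eq K_def[symmetric] mult.assoc mult.left_commute mult_left_mono)
  qed
  have "(\<integral>\<^sup>+z. ennreal (exp (a * z$j) * gauss_prec_density A z) \<partial>lborel)
     \<le> (\<integral>\<^sup>+z. ennreal (K * exp (a\<^sup>2 / c)) * ennreal (exp (- ((c/2) * (norm z)\<^sup>2 / 2))) \<partial>(lborel::(real^'p) measure))"
    apply (rule nn_integral_mono) using K bnd by (simp add: ennreal_mult[symmetric] ennreal_leI)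
  also have "\<dots> = ennreal (K * exp (a\<^sup>2 / c)) * (\<integral>\<^sup>+z. ennreal (exp (- ((c/2) * (norm z)\<^sup>2 / 2))) \<partial>(lborel::(real^'p) measure))"
    by (rule nn_integral_cmult) measurable
  also have "\<dots> < \<infinity>"
    using gauss_mat_finite[of "c/2", where 'p='p] c(1) by (simp add: ennreal_mult_less_top)
  finally show ?thesis .
qed



lemma poisson_fact_moment:
  fixes r :: real assumes r: "r > 0"
  shows "(\<integral>\<^sup>+k. ennreal (real k * (real k - 1)) \<partial>measure_pmf (poisson_pmf r)) = ennreal (r\<^sup>2)"
proof -
  define f where "f k = r ^ k / fact k * exp (- r) * (real k * (real k - 1))" for k :: nat
  have f0: "f k \<ge> 0" for k
  proof (cases k)
    case 0 then show ?thesis by (simp add: f_def)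
  next
    case (Suc m) then show ?thesis using r by (simp add: f_def)
  qed
  have "(\<lambda>k. r\<^sup>2 * exp (-r) * (r ^ k / fact k)) sums (r\<^sup>2 * exp (-r) * exp r)"
    using exp_converges[of r] by (intro sums_mult) (simp add: divide_inverse_commute scaleR_conv_of_real)
  moreover have "f (k + 2) = r\<^sup>2 * exp (-r) * (r ^ k / fact k)" for k
  proof -
    define D where "D = (real k + 2) * (real k + 1)"
    have D: "D > 0" by (simp add: D_def)
    have e1: "real (k+2) * (real (k+2) - 1) = D" by (simp add: D_def algebra_simps)
    have e2: "(fact (k+2) :: real) = D * fact k"
      by (simp add: D_def numeral_2_eq_2 algebra_simps)
    have "f (k + 2) = r ^ k * r\<^sup>2 / (D * fact k) * exp (- r) * D"
      unfolding f_def e1 e2 by (simp add: power_add power2_eq_square)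
    also have "\<dots> = r\<^sup>2 * exp (-r) * (r ^ k / fact k)"
      using D by (simp add: field_simps power2_eq_square)
    finally show ?thesis .
  qed
  moreover have "r\<^sup>2 * exp (- r) * exp r = r\<^sup>2" by (simp add: mult.assoc exp_add[symmetric])
  ultimately have "(\<lambda>k. f (k + 2)) sums (r\<^sup>2)"
    by simp
  then have fs: "f sums (r\<^sup>2)"
    by (subst (asm) sums_iff_shift) (simp add: f_def numeral_2_eq_2)
  have "(\<integral>\<^sup>+k. ennreal (real k * (real k - 1)) \<partial>measure_pmf (poisson_pmf r)) = (\<integral>\<^sup>+k. ennreal (f k) \<partial>count_space UNIV)"
    unfolding nn_integral_measure_pmf
  proof (intro nn_integral_cong)
    fix k :: nat
    show "ennreal (pmf (poisson_pmf r) k) * ennreal (real k * (real k - 1)) = ennreal (f k)"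
    proof (cases k)
      case 0 then show ?thesis by (simp add: f_def)
    next
      case (Suc m) then show ?thesis using r by (simp add: f_def ennreal_mult[symmetric])
    qed
  qed
  also have "\<dots> = (\<Sum>k. ennreal (f k))" by (simp add: nn_integral_count_space_nat)
  also have "\<dots> = ennreal (r\<^sup>2)"
    using suminf_ennreal2[OF f0 sums_summable[OF fs]] sums_unique[OF fs] by simp
  finally show ?thesis .
qed



definition lamv :: "real^'m \<Rightarrow> real^'p \<Rightarrow> real^'p^'m \<Rightarrow> real^'p \<Rightarrow> 'p \<Rightarrow> real" where
  "lamv x off B z j = exp (off$j + (transpose B *v x)$j + z$j)"

definition Qpmf :: "real^'m \<Rightarrow> real^'p \<Rightarrow> real^'p^'m \<Rightarrow> real^'p \<Rightarrow> (nat^'p) pmf" where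
  "Qpmf x off B z = map_pmf vec_lambda (Pi_pmf UNIV 0 (\<lambda>j. poisson_pmf (lamv x off B z j)))"

lemma lamv_pos: "lamv x off B z j > 0" by (simp add: lamv_def)

lemma pmf_poisson_val: "r > 0 \<Longrightarrow> pmf (poisson_pmf r) k = poisson_pmf_val r k"
  by (simp add: poisson_pmf_val_def)

lemma pmf_Q: "pmf (Qpmf x off B z) Y = (\<Prod>j\<in>UNIV. poisson_pmf_val (lamv x off B z j) (Y$j))"
proof -
  have inj: "inj (vec_lambda :: ('p \<Rightarrow> nat) \<Rightarrow> nat^'p)" by (auto simp: inj_def vec_eq_iff fun_eq_iff)
  have "pmf (Qpmf x off B z) Y = pmf (Qpmf x off B z) (vec_lambda (vec_nth Y))" by simp
  also have "\<dots> = pmf (Pi_pmf UNIV 0 (\<lambda>j. poisson_pmf (lamv x off B z j))) (vec_nth Y)"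
    unfolding Qpmf_def by (rule pmf_map_inj'[OF inj])
  also have "\<dots> = (\<Prod>j\<in>UNIV. pmf (poisson_pmf (lamv x off B z j)) (Y$j))"
    by (rule pmf_Pi') auto
  also have "\<dots> = (\<Prod>j\<in>UNIV. poisson_pmf_val (lamv x off B z j) (Y$j))"
    by (intro prod.cong refl) (rule pmf_poisson_val[OF lamv_pos])
  finally show ?thesis .
qed

lemma Q_component: "map_pmf (\<lambda>Y. Y$j) (Qpmf x off B z) = poisson_pmf (lamv x off B z j)"
  unfolding Qpmf_def map_pmf_comp by (simp add: Pi_pmf_component)

lemma cont_q: "continuous_on UNIV (\<lambda>z. pmf (Qpmf x off B z) Y)"
  unfolding pmf_Q poisson_pmf_val_def lamv_def by (intro continuous_intros) auto

lemma meas_q[measurable]: "(\<lambda>z. pmf (Qpmf x off B z) Y) \<in> borel_measurable borel"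
  by (rule borel_measurable_continuous_onI[OF cont_q])

lemma pln_pmf_eq:
  fixes \<Omega> :: "real^'p^'p" and B :: "real^'p^'m" and x :: "real^'m" and off :: "real^'p"
  assumes "spd \<Omega>"
  shows "ennreal (pln_pmf x off (B, \<Omega>) Y) = (\<integral>\<^sup>+z. ennreal (pmf (Qpmf x off B z) Y * gauss_prec_density \<Omega> z) \<partial>lborel)"
proof -
  have eq: "pln_pmf x off (B, \<Omega>) Y = (\<integral>z. pmf (Qpmf x off B z) Y * gauss_prec_density \<Omega> z \<partial>lborel)"
    by (simp add: pln_pmf_def pmf_Q lamv_def)
  have gi: "integrable lborel (gauss_prec_density \<Omega>)"
  proof (rule integrableI_bounded)
    show "(\<integral>\<^sup>+z. ennreal (norm (gauss_prec_density \<Omega> z)) \<partial>lborel) < \<infinity>"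
      using gauss_dens_int[OF assms] gauss_dens_nonneg[OF assms] by simp
  qed simp
  have int: "integrable lborel (\<lambda>z. pmf (Qpmf x off B z) Y * gauss_prec_density \<Omega> z)"
  proof (rule Bochner_Integration.integrable_bound[OF gi])
    show "AE z in lborel. norm (pmf (Qpmf x off B z) Y * gauss_prec_density \<Omega> z) \<le> norm (gauss_prec_density \<Omega> z)"
      by (intro AE_I2) (auto intro!: mult_left_le_one_le simp: pmf_le_1 gauss_dens_nonneg[OF assms])
  qed simp
  show ?thesis unfolding eq
    by (rule nn_integral_eq_integral[symmetric, OF int]) (simp add: gauss_dens_nonneg[OF assms])
qed

lemma mixture:
  fixes \<Omega> :: "real^'p^'p" and B :: "real^'p^'m" and x :: "real^'m" and off :: "real^'p"
  assumes "spd \<Omega>"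
  shows "(\<integral>\<^sup>+Y. h Y \<partial>pln_law x off (B, \<Omega>)) = (\<integral>\<^sup>+z. ennreal (gauss_prec_density \<Omega> z) * (\<integral>\<^sup>+Y. h Y \<partial>measure_pmf (Qpmf x off B z)) \<partial>lborel)"
proof -
  have "(\<integral>\<^sup>+Y. h Y \<partial>pln_law x off (B, \<Omega>)) = (\<integral>\<^sup>+Y. ennreal (pln_pmf x off (B, \<Omega>) Y) * h Y \<partial>count_space UNIV)"
    unfolding pln_law_def by (subst nn_integral_density) auto
  also have "\<dots> = (\<integral>\<^sup>+Y. (\<integral>\<^sup>+z. ennreal (pmf (Qpmf x off B z) Y * gauss_prec_density \<Omega> z) * h Y \<partial>lborel) \<partial>count_space UNIV)"
    by (simp add: pln_pmf_eq[OF assms] nn_integral_multc)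
  also have "\<dots> = (\<integral>\<^sup>+z. (\<integral>\<^sup>+Y. ennreal (pmf (Qpmf x off B z) Y * gauss_prec_density \<Omega> z) * h Y \<partial>count_space UNIV) \<partial>lborel)"
    by (rule nn_integral_count_space_nn_integral[symmetric]) auto
  also have "\<dots> = (\<integral>\<^sup>+z. ennreal (gauss_prec_density \<Omega> z) * (\<integral>\<^sup>+Y. ennreal (pmf (Qpmf x off B z) Y) * h Y \<partial>count_space UNIV) \<partial>lborel)"
    by (intro nn_integral_cong, subst nn_integral_cmult[symmetric])
       (auto simp: ennreal_mult gauss_dens_nonneg[OF assms] mult_ac intro!: nn_integral_cong)
  also have "\<dots> = (\<integral>\<^sup>+z. ennreal (gauss_prec_density \<Omega> z) * (\<integral>\<^sup>+Y. h Y \<partial>measure_pmf (Qpmf x off B z)) \<partial>lborel)"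
    by (simp add: nn_integral_measure_pmf)
  finally show ?thesis .
qed

lemma prob_space_pln:
  fixes \<Omega> :: "real^'p^'p" and B :: "real^'p^'m" and x :: "real^'m" and off :: "real^'p"
  assumes "spd \<Omega>"
  shows "prob_space (pln_law x off (B, \<Omega>))"
proof
  have "emeasure (pln_law x off (B, \<Omega>)) (space (pln_law x off (B, \<Omega>))) = (\<integral>\<^sup>+Y. 1 \<partial>pln_law x off (B, \<Omega>))"
    by simp
  also have "\<dots> = (\<integral>\<^sup>+z. ennreal (gauss_prec_density \<Omega> z) * (\<integral>\<^sup>+Y. 1 \<partial>measure_pmf (Qpmf x off B z)) \<partial>lborel)"
    by (rule mixture[OF assms])
  also have "\<dots> = (\<integral>\<^sup>+z. ennreal (gauss_prec_density \<Omega> z) \<partial>lborel)"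
    by (simp add: measure_pmf.emeasure_space_1)
  also have "\<dots> = 1" by (rule gauss_dens_int[OF assms])
  finally show "emeasure (pln_law x off (B, \<Omega>)) (space (pln_law x off (B, \<Omega>))) = 1" .
qed

lemma moment_finite:
  fixes \<Omega> :: "real^'p^'p" and B :: "real^'p^'m" and x :: "real^'m" and off :: "real^'p"
  assumes "spd \<Omega>"
  shows "(\<integral>\<^sup>+Y. ennreal (1 + (\<Sum>j\<in>UNIV. real (Y$j) * (real (Y$j) - 1))) \<partial>pln_law x off (B, \<Omega>)) < \<infinity>"
proof -
  have nn: "real k * (real k - 1) \<ge> 0" for k :: nat by (cases k) auto
  have inner: "(\<integral>\<^sup>+Y. ennreal (1 + (\<Sum>j\<in>UNIV. real (Y$j) * (real (Y$j) - 1))) \<partial>measure_pmf (Qpmf x off B z))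
      = 1 + (\<Sum>j\<in>UNIV. ennreal ((lamv x off B z j)\<^sup>2))" for z
  proof -
    have "(\<integral>\<^sup>+Y. ennreal (1 + (\<Sum>j\<in>UNIV. real (Y$j) * (real (Y$j) - 1))) \<partial>measure_pmf (Qpmf x off B z))
       = (\<integral>\<^sup>+Y. 1 + (\<Sum>j\<in>UNIV. ennreal (real (Y$j) * (real (Y$j) - 1))) \<partial>measure_pmf (Qpmf x off B z))"
      using nn by (intro nn_integral_cong) (simp add: ennreal_plus sum_nonneg)
    also have "\<dots> = 1 + (\<Sum>j\<in>UNIV. \<integral>\<^sup>+Y. ennreal (real (Y$j) * (real (Y$j) - 1)) \<partial>measure_pmf (Qpmf x off B z))"
      by (simp add: nn_integral_add nn_integral_sum measure_pmf.emeasure_space_1)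
    also have "\<dots> = 1 + (\<Sum>j\<in>UNIV. ennreal ((lamv x off B z j)\<^sup>2))"
    proof -
      have "(\<integral>\<^sup>+Y. ennreal (real (Y$j) * (real (Y$j) - 1)) \<partial>measure_pmf (Qpmf x off B z)) = ennreal ((lamv x off B z j)\<^sup>2)" for j
      proof -
        have "(\<integral>\<^sup>+Y. ennreal (real (Y$j) * (real (Y$j) - 1)) \<partial>measure_pmf (Qpmf x off B z))
          = (\<integral>\<^sup>+k. ennreal (real k * (real k - 1)) \<partial>measure_pmf (map_pmf (\<lambda>Y. Y$j) (Qpmf x off B z)))"
          by simp
        also have "\<dots> = ennreal ((lamv x off B z j)\<^sup>2)"
          unfolding Q_component by (rule poisson_fact_moment[OF lamv_pos])
        finally show ?thesis .
      qed
      then show ?thesis by simp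
    qed
    finally show ?thesis .
  qed
  have "(\<integral>\<^sup>+Y. ennreal (1 + (\<Sum>j\<in>UNIV. real (Y$j) * (real (Y$j) - 1))) \<partial>pln_law x off (B, \<Omega>))
      = (\<integral>\<^sup>+z. ennreal (gauss_prec_density \<Omega> z) * (1 + (\<Sum>j\<in>UNIV. ennreal ((lamv x off B z j)\<^sup>2))) \<partial>lborel)"
    by (simp add: mixture[OF assms] inner)
  also have "\<dots> = (\<integral>\<^sup>+z. ennreal (gauss_prec_density \<Omega> z) + (\<Sum>j\<in>UNIV. ennreal (exp (2 * (off$j + (transpose B *v x)$j))) * ennreal (exp (2 * z$j) * gauss_prec_density \<Omega> z)) \<partial>lborel)"
  proof (intro nn_integral_cong)
    fix z :: "real^'p"
    have lam: "(lamv x off B z j)\<^sup>2 = exp (2 * (off$j + (transpose B *v x)$j)) * exp (2 * z$j)" for j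
      by (simp add: lamv_def power2_eq_square exp_add[symmetric] algebra_simps)
    have g0: "gauss_prec_density \<Omega> z \<ge> 0" by (rule gauss_dens_nonneg[OF assms])
    have "ennreal (gauss_prec_density \<Omega> z) * ennreal ((lamv x off B z j)\<^sup>2) = ennreal (exp (2 * (off$j + (transpose B *v x)$j))) * ennreal (exp (2 * z$j) * gauss_prec_density \<Omega> z)" for j
      using g0 by (simp add: ennreal_mult[symmetric] lam mult_ac del: ennreal_mult' ennreal_mult'')
    then show "ennreal (gauss_prec_density \<Omega> z) * (1 + (\<Sum>j\<in>UNIV. ennreal ((lamv x off B z j)\<^sup>2))) =
         ennreal (gauss_prec_density \<Omega> z) + (\<Sum>j\<in>UNIV. ennreal (exp (2 * (off$j + (transpose B *v x)$j))) * ennreal (exp (2 * z$j) * gauss_prec_density \<Omega> z))"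
      by (simp add: distrib_left sum_distrib_left del: sum_ennreal)
  qed
  also have "\<dots> = (\<integral>\<^sup>+z. ennreal (gauss_prec_density \<Omega> z) \<partial>lborel) + (\<Sum>j\<in>UNIV. ennreal (exp (2 * (off$j + (transpose B *v x)$j))) * (\<integral>\<^sup>+z. ennreal (exp (2 * z$j) * gauss_prec_density \<Omega> z) \<partial>lborel))"
    by (simp add: nn_integral_add nn_integral_sum nn_integral_cmult)
  also have "\<dots> < \<infinity>"
    using gauss_dens_int[OF assms] gauss_exp_moment[OF assms, of 2]
    by (simp add: ennreal_mult_less_top)
  finally show ?thesis .
qed



lemma cont_det: "continuous_on S f \<Longrightarrow> continuous_on S (\<lambda>t. det (f t :: real^'p^'p))"
  unfolding det_def by (intro continuous_intros)

lemma elbo_expand: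
  "pln_elbo x off Y \<theta> \<psi> =
     (\<Sum>j\<in>UNIV. real (Y$j) * (off$j + (fst \<psi>)$j + (\<Sum>i\<in>UNIV. (fst \<theta>)$i$j * x$i)))
     - (\<Sum>j\<in>UNIV. exp (off $ j + (\<Sum>i\<in>UNIV. (fst \<theta>)$i$j * x$i) + (fst \<psi>) $ j + ((snd \<psi>) $ j)^2 / 2))
     - (\<Sum>j\<in>UNIV. ln (fact (Y $ j)))
     + ln (det (snd \<theta>)) / 2
     - (\<Sum>i\<in>UNIV. \<Sum>j\<in>UNIV. (fst \<psi>)$i * (snd \<theta>)$i$j * (fst \<psi>)$j) / 2
     - (\<Sum>j\<in>UNIV. (snd \<theta>) $ j $ j * ((snd \<psi>) $ j)^2) / 2
     + (\<Sum>j\<in>UNIV. ln ((snd \<psi>) $ j))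
     + real CARD('p) / 2"
  for x :: "real^'m" and off :: "real^'p"
  by (cases \<theta>; cases \<psi>)
     (simp add: pln_elbo_def inner_vec_def matrix_vector_mult_def transpose_def sum_distrib_left mult_ac)

lemma real_le_fm: "real k \<le> 1 + real k * (real k - 1)"
  by (cases k) (auto simp: algebra_simps)

lemma fm_nonneg: "real k * (real k - 1) \<ge> 0"
  by (cases k) auto

lemma ln_fact_le: "ln (fact k) \<le> real k * (real k - 1)"
proof (cases k)
  case 0 then show ?thesis by simp
next
  case (Suc n)
  then have kpos: "real k > 0" by simp
  have "ln (fact k) \<le> ln (real k ^ k)"
    using fact_le_power[of k, where 'a=real] by (subst ln_le_cancel_iff) auto
  also have "\<dots> = real k * ln (real k)" using kpos by (simp add: ln_realpow)
  also have "\<dots> \<le> real k * (real k - 1)" using kpos ln_le_minus_one[OF kpos] by (simp add: mult_left_mono)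
  finally show ?thesis .
qed

lemma ln_fact_nonneg: "ln (fact k :: real) \<ge> 0"
  using fact_ge_1[of k, where 'a=real] by simp


lemma elbo_cont:
  fixes x :: "real^'m" and off :: "real^'p" and \<Theta> :: "((real^'p^'m) \<times> (real^'p^'p)) set"
  assumes "\<forall>(B, \<Omega>)\<in>\<Theta>. spd \<Omega>"
  shows "continuous_on \<Theta> (\<lambda>\<theta>. pln_elbo x off Y \<theta> \<psi>)"
proof -
  have nz: "\<forall>\<theta>\<in>\<Theta>. det (snd \<theta>) \<noteq> 0"
  proof
    fix \<theta> assume "\<theta> \<in> \<Theta>"
    then have "spd (snd \<theta>)" using assms by (cases \<theta>) auto
    then show "det (snd \<theta>) \<noteq> 0" using gauss_spd(1) by force
  qed
  have L: "continuous_on \<Theta> (\<lambda>\<theta>. ln (det (snd \<theta>)))"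
    by (rule continuous_on_ln[OF cont_det[OF continuous_on_snd[OF continuous_on_id]] nz])
  show ?thesis
    unfolding elbo_expand
    apply (intro continuous_on_add continuous_on_diff continuous_on_divide continuous_on_const L continuous_on_sum continuous_on_mult continuous_on_exp continuous_on_power
       continuous_on_component continuous_on_fst continuous_on_snd continuous_on_id)
    apply auto
    done
qed




lemma elbo_decomp:
  "pln_elbo x off Y \<theta> \<psi> =
     (\<Sum>j\<in>UNIV. real (Y$j) * (off$j + (fst \<psi>)$j + (\<Sum>i\<in>UNIV. (fst \<theta>)$i$j * x$i)))
     - (\<Sum>j\<in>UNIV. ln (fact (Y $ j))) + pln_elbo x off 0 \<theta> \<psi>"
  for x :: "real^'m" and off :: "real^'p"
  by (simp add: elbo_expand)

lemma vbound:
  fixes x :: "real^'m" and off :: "real^'p" and B :: "real^'p^'m" and m :: "real^'p"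
  assumes "\<And>i j. \<bar>B$i$j\<bar> \<le> R" "\<And>j. \<bar>m$j\<bar> \<le> R'"
  shows "\<bar>off$j + m$j + (\<Sum>i\<in>UNIV. B$i$j * x$i)\<bar> \<le> norm off + R' + R * (\<Sum>i\<in>UNIV. \<bar>x$i\<bar>)"
proof -
  have "\<bar>\<Sum>i\<in>UNIV. B$i$j * x$i\<bar> \<le> (\<Sum>i\<in>UNIV. \<bar>B$i$j * x$i\<bar>)" by (rule sum_abs)
  also have "\<dots> \<le> (\<Sum>i\<in>UNIV. R * \<bar>x$i\<bar>)"
    using assms(1) by (intro sum_mono) (simp add: abs_mult mult_right_mono)
  finally have "\<bar>\<Sum>i\<in>UNIV. B$i$j * x$i\<bar> \<le> R * (\<Sum>i\<in>UNIV. \<bar>x$i\<bar>)" by (simp add: sum_distrib_left)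
  moreover have "\<bar>off$j\<bar> \<le> norm off" by (rule component_le_norm_cart)
  ultimately show ?thesis using assms(2)[of j] by linarith
qed

lemma Ysum_bound:
  fixes v :: "'p::finite \<Rightarrow> real"
  assumes "\<And>j. \<bar>v j\<bar> \<le> K"
  shows "\<bar>\<Sum>j\<in>UNIV. real (Y$j) * v j\<bar> \<le> K * (\<Sum>j\<in>UNIV. real (Y$j))"
proof -
  have "\<bar>\<Sum>j\<in>UNIV. real (Y$j) * v j\<bar> \<le> (\<Sum>j\<in>UNIV. \<bar>real (Y$j) * v j\<bar>)" by (rule sum_abs)
  also have "\<dots> \<le> (\<Sum>j\<in>UNIV. real (Y$j) * K)"
    using assms by (intro sum_mono) (simp add: abs_mult mult_left_mono)
  finally show ?thesis by (simp add: sum_distrib_left mult.commute)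
qed

lemma elbo_upper:
  fixes x :: "real^'m" and off :: "real^'p"
  assumes spd: "spd (snd \<theta>)"
    and BR: "\<And>i j. \<bar>(fst \<theta>)$i$j\<bar> \<le> R" and mR: "\<And>j. \<bar>(fst \<psi>)$j\<bar> \<le> R'" and sR: "\<And>j. \<bar>(snd \<psi>)$j\<bar> \<le> R'"
    and spos: "\<And>j. (snd \<psi>)$j > 0" and LD: "ln (det (snd \<theta>)) \<le> LD"
  shows "pln_elbo x off Y \<theta> \<psi> \<le> (norm off + R' + R * (\<Sum>i\<in>UNIV. \<bar>x$i\<bar>)) * (\<Sum>j\<in>UNIV. real (Y$j)) + (LD / 2 + real CARD('p) * R' + real CARD('p) / 2)"
proof -
  define K1 where "K1 = norm off + R' + R * (\<Sum>i\<in>UNIV. \<bar>x$i\<bar>)"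
  have a: "(\<Sum>j\<in>UNIV. real (Y$j) * (off$j + (fst \<psi>)$j + (\<Sum>i\<in>UNIV. (fst \<theta>)$i$j * x$i))) \<le> K1 * (\<Sum>j\<in>UNIV. real (Y$j))"
    using Ysum_bound[of "\<lambda>j. off$j + (fst \<psi>)$j + (\<Sum>i\<in>UNIV. (fst \<theta>)$i$j * x$i)" K1 Y]
      vbound[OF BR mR] unfolding K1_def by fastforce
  have b: "(\<Sum>j\<in>UNIV. exp (off $ j + (\<Sum>i\<in>UNIV. (fst \<theta>)$i$j * x$i) + (fst \<psi>) $ j + ((snd \<psi>) $ j)^2 / 2)) \<ge> 0"
    by (intro sum_nonneg) simp
  have c: "(\<Sum>j\<in>UNIV. ln (fact (Y $ j) :: real)) \<ge> 0"
    by (intro sum_nonneg ln_fact_nonneg)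
  have d: "(\<Sum>i\<in>UNIV. \<Sum>j\<in>UNIV. (fst \<psi>)$i * (snd \<theta>)$i$j * (fst \<psi>)$j) \<ge> 0"
  proof (cases "fst \<psi> = 0")
    case True then show ?thesis by simp
  next
    case False then show ?thesis using spd_pos[OF spd False] by (simp add: qf_expand)
  qed
  have e: "(\<Sum>j\<in>UNIV. (snd \<theta>) $ j $ j * ((snd \<psi>) $ j)^2) \<ge> 0"
    using spd_diag_pos[OF spd] by (intro sum_nonneg) (simp add: less_imp_le)
  have f: "(\<Sum>j\<in>UNIV. ln ((snd \<psi>) $ j)) \<le> real CARD('p) * R'"
  proof -
    have "(\<Sum>j\<in>UNIV. ln ((snd \<psi>) $ j)) \<le> (\<Sum>j\<in>(UNIV::'p set). R')"
    proof (intro sum_mono)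
      fix j :: 'p
      have "ln ((snd \<psi>) $ j) \<le> (snd \<psi>) $ j - 1" by (rule ln_le_minus_one[OF spos])
      then show "ln ((snd \<psi>) $ j) \<le> R'" using sR[of j] by linarith
    qed
    then show ?thesis by simp
  qed
  show ?thesis
    unfolding elbo_expand K1_def[symmetric] using a b c d e f LD by linarith
qed




lemma ln_det_cont:
  fixes \<Theta> :: "((real^'p^'m) \<times> (real^'p^'p)) set"
  assumes "\<forall>(B, \<Omega>)\<in>\<Theta>. spd \<Omega>"
  shows "continuous_on \<Theta> (\<lambda>\<theta>. ln (det (snd \<theta>)))"
proof -
  have nz: "\<forall>\<theta>\<in>\<Theta>. det (snd \<theta>) \<noteq> 0"
  proof
    fix \<theta> assume "\<theta> \<in> \<Theta>"
    then have "spd (snd \<theta>)" using assms by (cases \<theta>) auto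
    then show "det (snd \<theta>) \<noteq> 0" using gauss_spd(1) by force
  qed
  show ?thesis
    by (rule continuous_on_ln[OF cont_det[OF continuous_on_snd[OF continuous_on_id]] nz])
qed

theorem proposition4:
  fixes x :: "real^'m" and off :: "real^'p"
    and \<Theta> :: "((real^'p^'m) \<times> (real^'p^'p)) set"
    and \<Psi> :: "((real^'p) \<times> (real^'p)) set"
    and \<theta>\<^sub>0 :: "(real^'p^'m) \<times> (real^'p^'p)"
  assumes \<Theta>_spd: "\<forall>(B, \<Omega>)\<in>\<Theta>. spd \<Omega>"
    and A1: "compact \<Theta>"
    and true_param: "\<theta>\<^sub>0 \<in> \<Theta>"
    and \<Psi>_pos: "\<forall>(m, s)\<in>\<Psi>. \<forall>j. s $ j > 0"
    and \<Psi>_ne: "\<Psi> \<noteq> {}"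
    and A2: "bounded \<Psi>"
  shows
    "(AE Y in pln_law x off \<theta>\<^sub>0. \<forall>\<psi>\<in>\<Psi>. continuous_on \<Theta> (\<lambda>\<theta>. pln_elbo x off Y \<theta> \<psi>))
     \<and> (\<forall>est :: nat \<Rightarrow> (nat \<Rightarrow> nat^'p) \<Rightarrow> ((real^'p^'m) \<times> (real^'p^'p)).
          (\<forall>n. \<forall>ys\<in>space (pln_sample x off \<theta>\<^sub>0 n). is_ve x off \<Theta> \<Psi> n ys (est n ys)) \<longrightarrow>
          (\<exists>K. compact K \<and>
             (\<exists>A. (\<forall>n. A n \<in> sets (pln_sample x off \<theta>\<^sub>0 n)
                       \<and> A n \<subseteq> {ys \<in> space (pln_sample x off \<theta>\<^sub>0 n). est n ys \<in> K})
                  \<and> (\<lambda>n. measure (pln_sample x off \<theta>\<^sub>0 n) (A n)) \<longlonglongrightarrow> 1)))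
     \<and> (\<forall>\<delta>>0. \<forall>\<theta>'\<in>\<Theta>.
          (\<forall>Y. bdd_above {pln_elbo x off Y \<theta> \<psi> | \<theta> \<psi>. \<psi> \<in> \<Psi> \<and> \<theta> \<in> ball \<theta>' \<delta> \<inter> \<Theta>})
          \<and> integrable (pln_law x off \<theta>\<^sub>0)
              (\<lambda>Y. SUP \<psi>\<in>\<Psi>. SUP \<theta>\<in>ball \<theta>' \<delta> \<inter> \<Theta>. pln_elbo x off Y \<theta> \<psi>))"
proof -
  obtain B0 \<Omega>0 where th0: "\<theta>\<^sub>0 = (B0, \<Omega>0)" by (cases \<theta>\<^sub>0)
  have spd0: "spd \<Omega>0" using \<Theta>_spd true_param th0 by auto
  have P: "prob_space (pln_law x off \<theta>\<^sub>0)" unfolding th0 by (rule prob_space_pln[OF spd0])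
  have part1: "AE Y in pln_law x off \<theta>\<^sub>0. \<forall>\<psi>\<in>\<Psi>. continuous_on \<Theta> (\<lambda>\<theta>. pln_elbo x off Y \<theta> \<psi>)"
    by (intro AE_I2 ballI elbo_cont[OF \<Theta>_spd])
  have part2: "\<forall>est :: nat \<Rightarrow> (nat \<Rightarrow> nat^'p) \<Rightarrow> ((real^'p^'m) \<times> (real^'p^'p)).
          (\<forall>n. \<forall>ys\<in>space (pln_sample x off \<theta>\<^sub>0 n). is_ve x off \<Theta> \<Psi> n ys (est n ys)) \<longrightarrow>
          (\<exists>K. compact K \<and>
             (\<exists>A. (\<forall>n. A n \<in> sets (pln_sample x off \<theta>\<^sub>0 n)
                       \<and> A n \<subseteq> {ys \<in> space (pln_sample x off \<theta>\<^sub>0 n). est n ys \<in> K})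
                  \<and> (\<lambda>n. measure (pln_sample x off \<theta>\<^sub>0 n) (A n)) \<longlonglongrightarrow> 1))"
  proof (intro allI impI)
    fix est :: "nat \<Rightarrow> (nat \<Rightarrow> nat^'p) \<Rightarrow> ((real^'p^'m) \<times> (real^'p^'p))"
    assume ve: "\<forall>n. \<forall>ys\<in>space (pln_sample x off \<theta>\<^sub>0 n). is_ve x off \<Theta> \<Psi> n ys (est n ys)"
    have PS: "prob_space (pln_sample x off \<theta>\<^sub>0 n)" for n
      unfolding pln_sample_def by (rule prob_space_PiM) (rule P)
    show "\<exists>K. compact K \<and>
             (\<exists>A. (\<forall>n. A n \<in> sets (pln_sample x off \<theta>\<^sub>0 n)
                       \<and> A n \<subseteq> {ys \<in> space (pln_sample x off \<theta>\<^sub>0 n). est n ys \<in> K})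
                  \<and> (\<lambda>n. measure (pln_sample x off \<theta>\<^sub>0 n) (A n)) \<longlonglongrightarrow> 1)"
    proof (intro exI conjI allI)
      show "compact \<Theta>" by (rule A1)
      show "space (pln_sample x off \<theta>\<^sub>0 n) \<in> sets (pln_sample x off \<theta>\<^sub>0 n)" for n by simp
      show "space (pln_sample x off \<theta>\<^sub>0 n) \<subseteq> {ys \<in> space (pln_sample x off \<theta>\<^sub>0 n). est n ys \<in> \<Theta>}" for n
        using ve by (auto simp: is_ve_def)
      have "measure (pln_sample x off \<theta>\<^sub>0 n) (space (pln_sample x off \<theta>\<^sub>0 n)) = 1" for n
        using prob_space.prob_space[OF PS] .
      then show "(\<lambda>n. measure (pln_sample x off \<theta>\<^sub>0 n) (space (pln_sample x off \<theta>\<^sub>0 n))) \<longlonglongrightarrow> 1"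
        by simp
    qed
  qed
  obtain R where R: "\<And>\<theta>. \<theta> \<in> \<Theta> \<Longrightarrow> norm \<theta> \<le> R"
    using compact_imp_bounded[OF A1] by (auto simp: bounded_iff)
  obtain R' where R': "\<And>\<psi>. \<psi> \<in> \<Psi> \<Longrightarrow> norm \<psi> \<le> R'"
    using A2 by (auto simp: bounded_iff)
  have BR: "\<bar>(fst \<theta>)$i$j\<bar> \<le> R" if "\<theta> \<in> \<Theta>" for \<theta> i j
  proof -
    have "\<bar>(fst \<theta>)$i$j\<bar> \<le> norm ((fst \<theta>)$i)" by (rule component_le_norm_cart)
    also have "\<dots> \<le> norm (fst \<theta>)" by (rule Finite_Cartesian_Product.norm_nth_le)
    also have "\<dots> \<le> norm \<theta>" by (cases \<theta>) (simp add: norm_fst_le)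
    finally show ?thesis using R[OF that] by simp
  qed
  have mR: "\<bar>(fst \<psi>)$j\<bar> \<le> R'" "\<bar>(snd \<psi>)$j\<bar> \<le> R'" if "\<psi> \<in> \<Psi>" for \<psi> j
  proof -
    have "\<bar>(fst \<psi>)$j\<bar> \<le> norm (fst \<psi>)" by (rule component_le_norm_cart)
    also have "\<dots> \<le> norm \<psi>" by (cases \<psi>) (simp add: norm_fst_le)
    finally show "\<bar>(fst \<psi>)$j\<bar> \<le> R'" using R'[OF that] by simp
    have "\<bar>(snd \<psi>)$j\<bar> \<le> norm (snd \<psi>)" by (rule component_le_norm_cart)
    also have "\<dots> \<le> norm \<psi>" by (cases \<psi>) (simp add: norm_snd_le)
    finally show "\<bar>(snd \<psi>)$j\<bar> \<le> R'" using R'[OF that] by simp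
  qed
  have spos: "(snd \<psi>)$j > 0" if "\<psi> \<in> \<Psi>" for \<psi> j
    using \<Psi>_pos that by (cases \<psi>) auto
  have spdT: "spd (snd \<theta>)" if "\<theta> \<in> \<Theta>" for \<theta>
    using \<Theta>_spd that by (cases \<theta>) auto
  obtain LD where LD: "\<And>\<theta>. \<theta> \<in> \<Theta> \<Longrightarrow> ln (det (snd \<theta>)) \<le> LD"
  proof -
    have "compact ((\<lambda>\<theta>. ln (det (snd \<theta>))) ` \<Theta>)"
      by (rule compact_continuous_image[OF ln_det_cont[OF \<Theta>_spd] A1])
    then obtain a where "\<forall>y\<in>(\<lambda>\<theta>. ln (det (snd \<theta>))) ` \<Theta>. \<bar>y\<bar> \<le> a"
      using compact_imp_bounded bounded_real by blast
    then have "\<And>\<theta>. \<theta> \<in> \<Theta> \<Longrightarrow> ln (det (snd \<theta>)) \<le> a" by force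
    then show ?thesis by (rule that)
  qed
  define K1 where "K1 = norm off + R' + R * (\<Sum>i\<in>UNIV. \<bar>x$i\<bar>)"
  define C1 where "C1 = LD / 2 + real CARD('p) * R' + real CARD('p) / 2"
  define U where "U Y = K1 * (\<Sum>j\<in>UNIV. real (Y$j)) + C1" for Y :: "nat^'p"
  have upper: "pln_elbo x off Y \<theta> \<psi> \<le> U Y" if "\<theta> \<in> \<Theta>" "\<psi> \<in> \<Psi>" for Y \<theta> \<psi>
    unfolding U_def K1_def C1_def
    by (rule elbo_upper[OF spdT[OF that(1)] BR[OF that(1)] mR(1)[OF that(2)] mR(2)[OF that(2)] spos[OF that(2)] LD[OF that(1)]])
  have part3: "\<forall>\<delta>>0. \<forall>\<theta>'\<in>\<Theta>.
          (\<forall>Y. bdd_above {pln_elbo x off Y \<theta> \<psi> | \<theta> \<psi>. \<psi> \<in> \<Psi> \<and> \<theta> \<in> ball \<theta>' \<delta> \<inter> \<Theta>})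
          \<and> integrable (pln_law x off \<theta>\<^sub>0)
              (\<lambda>Y. SUP \<psi>\<in>\<Psi>. SUP \<theta>\<in>ball \<theta>' \<delta> \<inter> \<Theta>. pln_elbo x off Y \<theta> \<psi>)"
  proof (intro allI impI ballI conjI)
    fix \<delta> :: real and \<theta>' and Y :: "nat^'p"
    assume "\<delta> > 0" "\<theta>' \<in> \<Theta>"
    show "bdd_above {pln_elbo x off Y \<theta> \<psi> | \<theta> \<psi>. \<psi> \<in> \<Psi> \<and> \<theta> \<in> ball \<theta>' \<delta> \<inter> \<Theta>}"
      by (rule bdd_aboveI[of _ "U Y"]) (auto intro: upper)
  next
    fix \<delta> :: real and \<theta>'
    assume dpos: "\<delta> > 0" and th': "\<theta>' \<in> \<Theta>"
    define T where "T = ball \<theta>' \<delta> \<inter> \<Theta>"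
    have thT: "\<theta>' \<in> T" using dpos th' by (simp add: T_def)
    have TT: "T \<subseteq> \<Theta>" by (auto simp: T_def)
    obtain \<psi>0 where psi0: "\<psi>0 \<in> \<Psi>" using \<Psi>_ne by blast
    define F where "F Y = (SUP \<psi>\<in>\<Psi>. SUP \<theta>\<in>T. pln_elbo x off Y \<theta> \<psi>)" for Y
    have Fb: "pln_elbo x off Y \<theta>' \<psi>0 \<le> F Y \<and> F Y \<le> U Y" for Y
    proof -
      have G_le: "(SUP \<theta>\<in>T. pln_elbo x off Y \<theta> \<psi>) \<le> U Y" if "\<psi> \<in> \<Psi>" for \<psi>
        using thT TT that by (intro cSUP_least) (auto intro: upper)
      have bddG: "bdd_above ((\<lambda>\<theta>. pln_elbo x off Y \<theta> \<psi>) ` T)" if "\<psi> \<in> \<Psi>" for \<psi>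
        using TT that by (intro bdd_aboveI2[of _ _ "U Y"]) (auto intro: upper)
      have "pln_elbo x off Y \<theta>' \<psi>0 \<le> (SUP \<theta>\<in>T. pln_elbo x off Y \<theta> \<psi>0)"
        by (rule cSUP_upper[OF thT bddG[OF psi0]])
      also have "\<dots> \<le> F Y"
        unfolding F_def by (rule cSUP_upper[OF psi0]) (auto intro!: bdd_aboveI2[of _ _ "U Y"] G_le)
      finally have "pln_elbo x off Y \<theta>' \<psi>0 \<le> F Y" .
      moreover have "F Y \<le> U Y"
        unfolding F_def using \<Psi>_ne by (intro cSUP_least G_le) auto
      ultimately show ?thesis by simp
    qed
    define W where "W Y = 1 + (\<Sum>j\<in>UNIV. real (Y$j) * (real (Y$j) - 1))" for Y :: "nat^'p"
    have W1: "W Y \<ge> 1" for Y unfolding W_def using fm_nonneg by (simp add: sum_nonneg)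
    have sumY: "(\<Sum>j\<in>UNIV. real (Y$j)) \<le> (real CARD('p) + 1) * W Y" for Y :: "nat^'p"
    proof -
      have "(\<Sum>j\<in>UNIV. real (Y$j)) \<le> (\<Sum>j\<in>UNIV. 1 + real (Y$j) * (real (Y$j) - 1))"
        by (intro sum_mono real_le_fm)
      also have "\<dots> = real CARD('p) + (W Y - 1)" by (simp add: W_def sum.distrib)
      also have "\<dots> \<le> (real CARD('p) + 1) * W Y"
      proof -
        have "real CARD('p) * 1 \<le> real CARD('p) * W Y" using W1[of Y] by (intro mult_left_mono) auto
        moreover have "(real CARD('p) + 1) * W Y = real CARD('p) * W Y + W Y" by (simp add: algebra_simps)
        ultimately show ?thesis by linarith
      qed
      finally show ?thesis .
    qed
    have lnF: "(\<Sum>j\<in>UNIV. ln (fact (Y $ j) :: real)) \<le> W Y" for Y :: "nat^'p"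
    proof -
      have "(\<Sum>j\<in>UNIV. ln (fact (Y $ j) :: real)) \<le> (\<Sum>j\<in>UNIV. real (Y$j) * (real (Y$j) - 1))"
        by (intro sum_mono ln_fact_le)
      then show ?thesis by (simp add: W_def)
    qed
    have K1: "K1 \<ge> 0"
    proof -
      have "R' \<ge> 0" using R'[OF psi0] norm_ge_zero order_trans by blast
      moreover have "R \<ge> 0" using R[OF th'] norm_ge_zero order_trans by blast
      ultimately show ?thesis unfolding K1_def by (simp add: sum_nonneg)
    qed
    define J0 where "J0 = pln_elbo x off 0 \<theta>' \<psi>0"
    define C where "C = K1 * (real CARD('p) + 1) + \<bar>C1\<bar> + 1 + \<bar>J0\<bar>"
    have Fbound: "\<bar>F Y\<bar> \<le> C * W Y" for Y
    proof -
      have L: "pln_elbo x off Y \<theta>' \<psi>0 =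
         (\<Sum>j\<in>UNIV. real (Y$j) * (off$j + (fst \<psi>0)$j + (\<Sum>i\<in>UNIV. (fst \<theta>')$i$j * x$i)))
         - (\<Sum>j\<in>UNIV. ln (fact (Y $ j))) + J0"
        unfolding J0_def by (rule elbo_decomp)
      have Sv: "\<bar>\<Sum>j\<in>UNIV. real (Y$j) * (off$j + (fst \<psi>0)$j + (\<Sum>i\<in>UNIV. (fst \<theta>')$i$j * x$i))\<bar> \<le> K1 * (\<Sum>j\<in>UNIV. real (Y$j))"
        by (rule Ysum_bound) (unfold K1_def, rule vbound[OF BR[OF th'] mR(1)[OF psi0]])
      have lf0: "(\<Sum>j\<in>UNIV. ln (fact (Y $ j) :: real)) \<ge> 0" by (intro sum_nonneg ln_fact_nonneg)
      have sY0: "(\<Sum>j\<in>UNIV. real (Y$j)) \<ge> 0" by (simp add: sum_nonneg)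
      have "\<bar>F Y\<bar> \<le> K1 * (\<Sum>j\<in>UNIV. real (Y$j)) + \<bar>C1\<bar> + W Y + \<bar>J0\<bar>"
        using Fb[of Y] L Sv lnF[of Y] lf0 K1 sY0 W1[of Y] unfolding U_def
        by (smt (verit) mult_nonneg_nonneg)
      also have "\<dots> \<le> K1 * ((real CARD('p) + 1) * W Y) + \<bar>C1\<bar> * W Y + W Y + \<bar>J0\<bar> * W Y"
      proof -
        have "K1 * (\<Sum>j\<in>UNIV. real (Y$j)) \<le> K1 * ((real CARD('p) + 1) * W Y)"
          using K1 sumY[of Y] by (rule mult_left_mono[rotated])
        moreover have "\<bar>C1\<bar> \<le> \<bar>C1\<bar> * W Y" using W1[of Y] by (simp add: mult_le_cancel_left1)
        moreover have "\<bar>J0\<bar> \<le> \<bar>J0\<bar> * W Y" using W1[of Y] by (simp add: mult_le_cancel_left1)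
        ultimately show ?thesis by linarith
      qed
      also have "\<dots> = C * W Y" by (simp add: C_def algebra_simps)
      finally show ?thesis .
    qed
    have C0: "C \<ge> 0" using K1 by (simp add: C_def)
    show "integrable (pln_law x off \<theta>\<^sub>0) (\<lambda>Y. SUP \<psi>\<in>\<Psi>. SUP \<theta>\<in>ball \<theta>' \<delta> \<inter> \<Theta>. pln_elbo x off Y \<theta> \<psi>)"
      unfolding T_def[symmetric] F_def[symmetric]
    proof (rule integrableI_bounded)
      show "F \<in> borel_measurable (pln_law x off \<theta>\<^sub>0)"
        by (simp add: pln_law_def)
      have "(\<integral>\<^sup>+Y. ennreal (norm (F Y)) \<partial>pln_law x off \<theta>\<^sub>0) \<le> (\<integral>\<^sup>+Y. ennreal C * ennreal (W Y) \<partial>pln_law x off \<theta>\<^sub>0)"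
      proof (intro nn_integral_mono)
        fix Y
        have W0: "W Y \<ge> 0" using W1[of Y] by simp
        have "ennreal (norm (F Y)) \<le> ennreal (C * W Y)" using Fbound[of Y] by (simp add: ennreal_leI)
        also have "\<dots> = ennreal C * ennreal (W Y)" by (rule ennreal_mult[OF C0 W0])
        finally show "ennreal (norm (F Y)) \<le> ennreal C * ennreal (W Y)" .
      qed
      also have "\<dots> = ennreal C * (\<integral>\<^sup>+Y. ennreal (W Y) \<partial>pln_law x off \<theta>\<^sub>0)"
        by (rule nn_integral_cmult) (simp add: pln_law_def)
      also have "\<dots> < \<infinity>"
        using moment_finite[OF spd0, of x off B0] unfolding th0 W_def
        by (simp add: ennreal_mult_less_top)
      finally show "(\<integral>\<^sup>+Y. ennreal (norm (F Y)) \<partial>pln_law x off \<theta>\<^sub>0) < \<infinity>" .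
    qed
  qed
  show ?thesis using part1 part2 part3 by blast
qed


end
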